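(* For every integer $n\ge1$, with $$S_{n,n}=(-1)^n\sum_{i=0}^n\sum_{p=0}^i(-1)^p\binom{n+1}{i-p}p^n,\qquad C_{n,n}=\sum_{k=1}^n\frac{2^n-2^{n-k}}{k+1}\sum_{t=0}^{k+1}(-1)^t\binom{k+1}{t}t^{n+1},$$ one has $S_{n,n}=C_{n,n}$.
   Context: Convention $0^0=1$. *)

theory Defs
  imports Complex_Main
begin
end

theory Submission
  imports Defs
begin

lemma K: "r < N \<Longrightarrow> (\<Sum>j\<le>N. (-1)^j * int (N choose j) * (int j + c)^r) = 0"
proof (induction r arbitrary: N c)
  case 0
  then show ?case using choose_alternating_sum[of N, where 'a=int] by simp
next
  case (Suc r)
  then obtain M where M: "N = Suc M" and rM: "r < M" by (cases N) auto
  have IH: "(\<Sum>i\<le>M. (-1)^i * int (M choose i) * (int i + (c+1))^r) = 0"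
    using Suc.IH rM by blast
  have IH2: "(\<Sum>j\<le>N. (-1)^j * int (N choose j) * (int j + c)^r) = 0"
    using Suc.IH Suc.prems by simp
  have "(\<Sum>j\<le>N. (-1)^j * int (N choose j) * (int j + c)^Suc r)
     = (\<Sum>j\<le>N. (-1)^j * int (N choose j) * int j * (int j + c)^r)
       + c * (\<Sum>j\<le>N. (-1)^j * int (N choose j) * (int j + c)^r)"
    by (simp add: sum_distrib_left sum.distrib[symmetric] algebra_simps)
  also have "(\<Sum>j\<le>N. (-1)^j * int (N choose j) * int j * (int j + c)^r)
     = (\<Sum>i\<le>M. (-1)^(Suc i) * int (N choose Suc i) * int (Suc i) * (int (Suc i) + c)^r)"
    unfolding M by (subst sum.atMost_Suc_shift) simp
  also have "\<dots> = (\<Sum>i\<le>M. - (int N * ((-1)^i * int (M choose i) * (int i + (c+1))^r)))"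
  proof (rule sum.cong[OF refl])
    fix i
    have e: "int (Suc i) * int (N choose Suc i) = int N * int (M choose i)"
      using Suc_times_binomial[of i M] unfolding M by (metis of_nat_mult)
    then show "(-1)^(Suc i) * int (N choose Suc i) * int (Suc i) * (int (Suc i) + c)^r
       = - (int N * ((-1)^i * int (M choose i) * (int i + (c+1))^r))"
    proof -
      have "(-1)^(Suc i) * int (N choose Suc i) * int (Suc i) * (int (Suc i) + c)^r
         = - ((int (Suc i) * int (N choose Suc i)) * ((-1)^i * (int i + (c+1))^r))"
        by (simp add: ac_simps)
      then show ?thesis unfolding e by (simp only: ac_simps)
    qed
  qed
  also have "\<dots> = 0" using IH by (simp add: sum_negf sum_distrib_left[symmetric])
  finally show ?case using IH2 by simp
qed

lemma neg1_parity: "even (a + b) \<Longrightarrow> (-1::int)^a = (-1)^b"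
  by (simp add: minus_one_power_iff)

definition fsq :: "nat \<Rightarrow> nat \<Rightarrow> nat \<Rightarrow> int" where
  "fsq n s j = (-1)^(s+j) * int (Suc n choose j) * (int s - int j)^n"

definition L0 :: "nat \<Rightarrow> int" where
  "L0 n = (\<Sum>i = 0..n. \<Sum>p = 0..i. (-1) ^ p * int ((n + 1) choose (i - p)) * int p ^ n)"

lemma row0: "(\<Sum>j\<le>Suc n. fsq n s j) = 0"
proof -
  have "(\<Sum>j\<le>Suc n. fsq n s j) = ((-1)^s * (-1)^n) *
     (\<Sum>j\<le>Suc n. (-1)^j * int (Suc n choose j) * (int j + (- int s))^n)"
    unfolding sum_distrib_left
  proof (rule sum.cong[OF refl])
    fix j
    have "(int s - int j)^n = (-1)^n * (int j + (- int s))^n"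
      by (metis minus_diff_eq power_minus uminus_add_conv_diff add.commute)
    then show "fsq n s j = ((-1)^s * (-1)^n) * ((-1)^j * int (Suc n choose j) * (int j + (- int s))^n)"
      unfolding fsq_def by (simp add: power_add ac_simps)
  qed
  also have "\<dots> = 0" using K[of n "Suc n" "- int s"] by simp
  finally show ?thesis .
qed

lemma L0_tri:
  assumes "n \<ge> 1"
  shows "L0 n = (\<Sum>s\<le>Suc n. \<Sum>j\<le>Suc n. if j \<le> s then fsq n s j else 0)"
proof -
  have inner: "(\<Sum>p = 0..i. (-1) ^ p * int ((n + 1) choose (i - p)) * int p ^ n)
      = (\<Sum>j\<le>Suc n. if j \<le> i then fsq n i j else 0)" if "i \<le> Suc n" for i
  proof -
    have "(\<Sum>p = 0..i. (-1) ^ p * int ((n + 1) choose (i - p)) * int p ^ n)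
        = (\<Sum>j\<le>i. fsq n i j)"
    proof (rule sum.reindex_bij_witness[where i="\<lambda>j. i - j" and j="\<lambda>p. i - p"])
      fix p assume p: "p \<in> {0..i}"
      then have "(-1::int)^(i+(i-p)) = (-1)^p" by (intro neg1_parity) auto
      moreover have "int i - int (i - p) = int p" using p by auto
      ultimately show "fsq n i (i - p) = (-1) ^ p * int ((n + 1) choose (i - p)) * int p ^ n"
        unfolding fsq_def by simp
    qed auto
    also have "\<dots> = (\<Sum>j\<le>Suc n. if j \<le> i then fsq n i j else 0)"
    proof -
      have "{x \<in> {..Suc n}. x \<le> i} = {..i}" using that by auto
      moreover have "(\<Sum>j\<le>Suc n. if j \<le> i then fsq n i j else 0) = sum (fsq n i) {x \<in> {..Suc n}. x \<le> i}"
        by (rule sum.inter_filter[symmetric]) simp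
      ultimately show ?thesis by simp
    qed
    finally show ?thesis .
  qed
  have "L0 n = (\<Sum>i\<le>n. \<Sum>j\<le>Suc n. if j \<le> i then fsq n i j else 0)"
    unfolding L0_def
  proof (rule sum.cong)
    fix i assume "i \<in> {..n}"
    then show "(\<Sum>p = 0..i. (-1) ^ p * int ((n + 1) choose (i - p)) * int p ^ n)
      = (\<Sum>j\<le>Suc n. if j \<le> i then fsq n i j else 0)" by (intro inner) auto
  qed auto
  also have "\<dots> = (\<Sum>s\<le>Suc n. \<Sum>j\<le>Suc n. if j \<le> s then fsq n s j else 0)"
  proof -
    have "(\<Sum>j\<le>Suc n. if j \<le> Suc n then fsq n (Suc n) j else 0) = 0"
      using row0[of n "Suc n"] by simp
    then show ?thesis by simp
  qed
  finally show ?thesis .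
qed

lemma L0_even:
  assumes "n \<ge> 1" "even n"
  shows "L0 n = 0"
proof -
  let ?N = "Suc n"
  let ?T1 = "(\<Sum>s\<le>?N. \<Sum>j\<le>?N. if j \<le> s then fsq n s j else 0)"
  let ?T2 = "(\<Sum>s\<le>?N. \<Sum>j\<le>?N. if s < j then fsq n s j else 0)"
  have tot: "?T1 + ?T2 = 0"
  proof -
    have "?T1 + ?T2 = (\<Sum>s\<le>?N. \<Sum>j\<le>?N. fsq n s j)"
      unfolding sum.distrib[symmetric] by (intro sum.cong refl) auto
    also have "\<dots> = 0" using row0 by simp
    finally show ?thesis .
  qed
  have "?T2 = (\<Sum>(s,j)\<in>{..?N}\<times>{..?N}. if s < j then fsq n s j else 0)"
    by (simp add: sum.cartesian_product del: sum.atMost_Suc)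
  also have "\<dots> = (\<Sum>(s,j)\<in>{..?N}\<times>{..?N}. if ?N - s < ?N - j then fsq n (?N - s) (?N - j) else 0)"
    by (rule sum.reindex_bij_witness[where i="\<lambda>(s,j). (?N-s,?N-j)" and j="\<lambda>(s,j). (?N-s,?N-j)"]) auto
  also have "\<dots> = (\<Sum>(s,j)\<in>{..?N}\<times>{..?N}. if j \<le> s then fsq n s j else 0)"
  proof (rule sum.cong[OF refl])
    fix x assume "x \<in> {..?N}\<times>{..?N}"
    then obtain s j where x: "x = (s,j)" and sj: "s \<in> {..?N}" "j \<in> {..?N}" by auto
    have p: "(-1::int)^(?N - s + (?N - j)) = (-1)^(s+j)" using sj by (intro neg1_parity) auto
    have d: "int (?N - s) - int (?N - j) = int j - int s" using sj by auto
    have c: "?N choose (?N - j) = ?N choose j" using sj by (metis binomial_symmetric atMost_iff)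
    have e: "(int j - int s)^n = (int s - int j)^n"
      using assms(2) by (metis minus_diff_eq power_minus_even)
    have f: "fsq n (?N - s) (?N - j) = fsq n s j"
      unfolding fsq_def p d c e ..
    have z: "fsq n s s = 0" using assms(1) unfolding fsq_def by simp
    have "(if ?N - s < ?N - j then fsq n (?N - s) (?N - j) else 0) = (if j \<le> s then fsq n s j else 0)"
      using sj f z by (cases "j = s") auto
    then show "(case x of (s,j) \<Rightarrow> if ?N - s < ?N - j then fsq n (?N - s) (?N - j) else 0) = (case x of (s,j) \<Rightarrow> if j \<le> s then fsq n s j else 0)"
      unfolding x by simp
  qed
  also have "\<dots> = ?T1" by (simp add: sum.cartesian_product del: sum.atMost_Suc)
  finally have "?T2 = ?T1" .
  then have "?T1 = 0" using tot by simp
  then show ?thesis using L0_tri[OF assms(1)] by simp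
qed

definition D :: "nat \<Rightarrow> nat \<Rightarrow> int" where
  "D n k = (\<Sum>s\<le>k. (-1)^s * int (k choose s) * (int s + 1)^n)"

definition Q :: "nat \<Rightarrow> nat \<Rightarrow> int" where
  "Q m s = (\<Sum>j\<le>s. int (m choose j))"

lemma step_a: "(\<Sum>t = 0..k+1. (-1)^t * int ((k+1) choose t) * int t ^ (n+1)) = - (int k + 1) * D n k"
proof -
  have "(\<Sum>t = 0..k+1. (-1)^t * int ((k+1) choose t) * int t ^ (n+1))
      = (\<Sum>t\<le>Suc k. (-1)^t * int (Suc k choose t) * int t ^ (n+1))"
    by (simp add: atLeast0AtMost)
  also have "\<dots> = (\<Sum>s\<le>k. (-1)^Suc s * int (Suc k choose Suc s) * int (Suc s) ^ (n+1))"
    by (subst sum.atMost_Suc_shift) simp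
  also have "\<dots> = (\<Sum>s\<le>k. - (int k + 1) * ((-1)^s * int (k choose s) * (int s + 1)^n))"
  proof (rule sum.cong[OF refl])
    fix s
    have e: "int (Suc s) * int (Suc k choose Suc s) = (int k + 1) * int (k choose s)"
      using Suc_times_binomial[of s k] by (metis of_nat_Suc of_nat_mult add.commute)
    have "(-1)^Suc s * int (Suc k choose Suc s) * int (Suc s) ^ (n+1)
       = - ((int (Suc s) * int (Suc k choose Suc s)) * ((-1)^s * (int s + 1)^n))"
      by (simp add: ac_simps)
    then show "(-1)^Suc s * int (Suc k choose Suc s) * int (Suc s) ^ (n+1)
       = - (int k + 1) * ((-1)^s * int (k choose s) * (int s + 1)^n)"
      unfolding e by (simp only: mult_minus_right mult_minus_left) (simp add: ac_simps)
  qed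
  also have "\<dots> = - (int k + 1) * D n k"
    unfolding D_def by (simp add: sum_distrib_left)
  finally show ?thesis .
qed

lemma D_ext: "k \<le> n \<Longrightarrow> D m k = (\<Sum>s\<le>n. (-1)^s * int (k choose s) * (int s + 1)^m)"
  unfolding D_def by (rule sum.mono_neutral_left) auto

lemma step_b:
  assumes "n \<ge> 1"
  shows "(\<Sum>k\<le>n. D n k) = 0"
proof -
  have "(\<Sum>k\<le>n. D n k) = (\<Sum>k\<le>n. \<Sum>s\<le>n. (-1)^s * int (k choose s) * (int s + 1)^n)"
    by (intro sum.cong refl D_ext) auto
  also have "\<dots> = (\<Sum>s\<le>n. \<Sum>k\<le>n. (-1)^s * int (k choose s) * (int s + 1)^n)"
    by (rule sum.swap)
  also have "\<dots> = (\<Sum>s\<le>n. (-1)^s * (int s + 1)^n * int (\<Sum>k\<le>n. k choose s))"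
    by (simp add: sum_distrib_left sum_distrib_right ac_simps)
  also have "\<dots> = (\<Sum>s\<le>n. (-1)^s * (int s + 1)^n * int (Suc n choose Suc s))"
    by (simp add: sum_choose_upper)
  also have "\<dots> = - (\<Sum>j\<le>Suc n. (-1)^j * int (Suc n choose j) * (int j + 0)^n)"
    using assms by (subst sum.atMost_Suc_shift) (simp add: sum_negf[symmetric] ac_simps)
  also have "\<dots> = 0" using K[of n "Suc n" 0] by simp
  finally show ?thesis .
qed

lemma Q0: "Q 0 s = 1"
  unfolding Q_def by (induction s) auto

lemma Q_Suc: "Q (Suc m) s = 2 * Q m s - int (m choose s)"
  unfolding Q_def by (induction s) (auto simp: algebra_simps)

lemma W: "(\<Sum>k\<le>n. 2^(n-k) * int (k choose s)) = 2^(Suc n) - Q (Suc n) s"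
proof (induction n)
  case 0
  then show ?case by (simp add: Q_Suc Q0)
next
  case (Suc n)
  have "(\<Sum>k\<le>Suc n. 2^(Suc n-k) * int (k choose s))
     = 2 * (\<Sum>k\<le>n. 2^(n-k) * int (k choose s)) + int (Suc n choose s)"
  proof -
    have "(\<Sum>k\<le>n. 2^(Suc n-k) * int (k choose s)) = 2 * (\<Sum>k\<le>n. 2^(n-k) * int (k choose s))"
      unfolding sum_distrib_left by (intro sum.cong refl) (simp add: Suc_diff_le)
    then show ?thesis by simp
  qed
  also have "\<dots> = 2^(Suc (Suc n)) - Q (Suc (Suc n)) s"
    unfolding Suc.IH by (simp add: Q_Suc[of "Suc n"])
  finally show ?case .
qed

lemma Q_sym:
  assumes "p \<le> n"
  shows "Q (Suc n) (n - p) + Q (Suc n) p = 2^Suc n"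
proof -
  define m where "m = n - p"
  have n: "Suc n = p + (m + 1)" using assms m_def by simp
  have "Q (Suc n) m = (\<Sum>j\<le>m. int (Suc n choose (Suc n - j)))"
    unfolding Q_def
  proof (intro sum.cong refl)
    fix j assume "j \<in> {..m}"
    then have "j \<le> Suc n" using n by auto
    then show "int (Suc n choose j) = int (Suc n choose (Suc n - j))"
      using binomial_symmetric by metis
  qed
  also have "\<dots> = (\<Sum>i = p + 1..p + (m + 1). int (Suc n choose i))"
    by (rule sum.reindex_bij_witness[where i="\<lambda>i. Suc n - i" and j="\<lambda>j. Suc n - j"]) (auto simp: n)
  finally have a: "Q (Suc n) m = (\<Sum>i = p + 1..p + (m + 1). int (Suc n choose i))" .
  have "(2::int)^Suc n = (\<Sum>i = 0..p + (m + 1). int (Suc n choose i))"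
    using choose_row_sum[of "Suc n"] unfolding n[symmetric] atLeast0AtMost
    by (metis of_nat_numeral of_nat_power of_nat_sum)
  also have "\<dots> = (\<Sum>i = 0..p. int (Suc n choose i)) + (\<Sum>i = p + 1..p + (m + 1). int (Suc n choose i))"
    by (rule sum.ub_add_nat) simp
  finally show ?thesis using a unfolding m_def Q_def atLeast0AtMost by simp
qed

lemma L0_Q: "L0 n = (\<Sum>p\<le>n. (-1)^p * int p ^ n * Q (Suc n) (n - p))"
proof -
  let ?g = "\<lambda>p j. (-1)^p * int (Suc n choose j) * int p ^ n"
  have "L0 n = (\<Sum>k\<le>n. \<Sum>p\<le>k. ?g p (k - p))"
    unfolding L0_def by (simp add: atLeast0AtMost)
  also have "\<dots> = (\<Sum>(p,j)\<in>{(p,j). p + j \<le> n}. ?g p j)"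
    by (rule sum.triangle_reindex_eq[symmetric])
  also have "{(p,j). p + j \<le> n} = (SIGMA p:{..n}. {..n-p})" by auto
  also have "(\<Sum>(p,j)\<in>(SIGMA p:{..n}. {..n-p}). ?g p j) = (\<Sum>p\<le>n. \<Sum>j\<le>n-p. ?g p j)"
    by (rule sum.Sigma[symmetric]) auto
  also have "\<dots> = (\<Sum>p\<le>n. (-1)^p * int p ^ n * Q (Suc n) (n - p))"
    unfolding Q_def by (simp add: sum_distrib_left sum_distrib_right ac_simps)
  finally show ?thesis .
qed

lemma QNN: "Q (Suc n) (Suc n) = 2 ^ Suc n"
  unfolding Q_def using choose_row_sum[of "Suc n"] by (metis of_nat_numeral of_nat_power of_nat_sum)

lemma step_c:
  assumes "n \<ge> 1"
  shows "(\<Sum>k\<le>n. 2^(n-k) * D n k) = - L0 n"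
proof -
  let ?N = "Suc n"
  have "(\<Sum>k\<le>n. 2^(n-k) * D n k) = (\<Sum>k\<le>n. \<Sum>s\<le>n. 2^(n-k) * ((-1)^s * int (k choose s) * (int s + 1)^n))"
    by (intro sum.cong refl) (simp add: D_ext sum_distrib_left)
  also have "\<dots> = (\<Sum>s\<le>n. \<Sum>k\<le>n. 2^(n-k) * ((-1)^s * int (k choose s) * (int s + 1)^n))"
    by (rule sum.swap)
  also have "\<dots> = (\<Sum>s\<le>n. (-1)^s * (int s + 1)^n * (\<Sum>k\<le>n. 2^(n-k) * int (k choose s)))"
    by (simp add: sum_distrib_left sum_distrib_right ac_simps)
  also have "\<dots> = (\<Sum>s\<le>n. (-1)^s * (int s + 1)^n * (2^?N - Q ?N s))"
    by (simp only: W)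
  finally have Z: "(\<Sum>k\<le>n. 2^(n-k) * D n k) = (\<Sum>s\<le>n. (-1)^s * (int s + 1)^n * (2^?N - Q ?N s))" .
  have "L0 n = (\<Sum>p\<le>n. (-1)^p * int p ^ n * (2^?N - Q ?N p))"
    unfolding L0_Q
  proof (intro sum.cong refl)
    fix p assume "p \<in> {..n}"
    then have "Q ?N (n - p) = 2^?N - Q ?N p" using Q_sym[of p n] by simp
    then show "(-1)^p * int p ^ n * Q ?N (n - p) = (-1)^p * int p ^ n * (2^?N - Q ?N p)" by simp
  qed
  also have "\<dots> = (\<Sum>p\<le>?N. (-1)^p * int p ^ n * (2^?N - Q ?N p))"
    using QNN[of n] by simp
  also have "\<dots> = (\<Sum>p\<le>?N. (-1)^p * int p ^ n * (2^?N - Q ?N p + int (?N choose p)))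
       - (\<Sum>p\<le>?N. (-1)^p * int (?N choose p) * (int p + 0)^n)"
    by (simp add: sum_subtractf[symmetric] algebra_simps del: sum.atMost_Suc)
  also have "(\<Sum>p\<le>?N. (-1)^p * int (?N choose p) * (int p + 0)^n) = 0"
    using K[of n ?N 0] by simp
  also have "(\<Sum>p\<le>?N. (-1)^p * int p ^ n * (2^?N - Q ?N p + int (?N choose p)))
      = (\<Sum>s\<le>n. (-1)^Suc s * int (Suc s) ^ n * (2^?N - Q ?N (Suc s) + int (?N choose Suc s)))"
    using assms by (subst sum.atMost_Suc_shift) simp
  also have "\<dots> = - (\<Sum>s\<le>n. (-1)^s * (int s + 1)^n * (2^?N - Q ?N s))"
    unfolding sum_negf[symmetric]
  proof (intro sum.cong refl)
    fix s
    have q: "Q ?N (Suc s) = Q ?N s + int (?N choose Suc s)" unfolding Q_def by simp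
    have g: "(-1::int)^Suc s * int (Suc s) ^ n * (A - (B + c) + c) = - ((-1)^s * (int s + 1)^n * (A - B))" for A B c
      by (simp add: add.commute)
    show "(-1)^Suc s * int (Suc s) ^ n * (2^?N - Q ?N (Suc s) + int (?N choose Suc s))
        = - ((-1)^s * (int s + 1)^n * (2^?N - Q ?N s))"
      unfolding q by (rule g)
  qed
  finally show ?thesis using Z by simp
qed

theorem mainTheorem14:
  fixes n :: nat
  assumes "n \<ge> 1"
  shows "(of_int ((-1) ^ n * (\<Sum>i = 0..n. \<Sum>p = 0..i.
              (-1) ^ p * int ((n + 1) choose (i - p)) * int p ^ n)) :: rat)
       = (\<Sum>k = 1..n. (2 ^ n - 2 ^ (n - k)) / (of_nat k + 1) *
              (\<Sum>t = 0..k + 1. (-1) ^ t * of_nat ((k + 1) choose t) * of_nat t ^ (n + 1)))"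
proof -
  have R: "(\<Sum>k = 1..n. (2 ^ n - 2 ^ (n - k)) / (of_nat k + 1) *
              (\<Sum>t = 0..k + 1. (-1) ^ t * of_nat ((k + 1) choose t) * of_nat t ^ (n + 1)) :: rat)
      = of_int (- (\<Sum>k\<le>n. (2 ^ n - 2 ^ (n - k)) * D n k))"
  proof -
    have "(\<Sum>k = 1..n. (2 ^ n - 2 ^ (n - k)) / (of_nat k + 1) *
              (\<Sum>t = 0..k + 1. (-1) ^ t * of_nat ((k + 1) choose t) * of_nat t ^ (n + 1)) :: rat)
        = (\<Sum>k = 1..n. of_int (- ((2 ^ n - 2 ^ (n - k)) * D n k)))"
    proof (rule sum.cong[OF refl])
      fix k
      have "(\<Sum>t = 0..k + 1. (-1) ^ t * of_nat ((k + 1) choose t) * of_nat t ^ (n + 1) :: rat)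
          = of_int (\<Sum>t = 0..k+1. (-1)^t * int ((k+1) choose t) * int t ^ (n+1))"
        by simp
      also have "\<dots> = - (of_nat k + 1) * of_int (D n k)" unfolding step_a by simp
      finally have e: "(\<Sum>t = 0..k + 1. (-1) ^ t * of_nat ((k + 1) choose t) * of_nat t ^ (n + 1) :: rat)
          = - (of_nat k + 1) * of_int (D n k)" .
      have nz: "(of_nat k + 1 :: rat) \<noteq> 0" by (metis of_nat_Suc of_nat_eq_0_iff add.commute nat.distinct(1))
      show "((2 ^ n - 2 ^ (n - k)) / (of_nat k + 1) *
              (\<Sum>t = 0..k + 1. (-1) ^ t * of_nat ((k + 1) choose t) * of_nat t ^ (n + 1)) :: rat)
           = of_int (- ((2 ^ n - 2 ^ (n - k)) * D n k))"
        unfolding e using nz by (simp add: field_simps)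
    qed
    also have "\<dots> = of_int (- (\<Sum>k = 1..n. (2 ^ n - 2 ^ (n - k)) * D n k))"
      by (simp add: sum_negf)
    also have "(\<Sum>k = 1..n. (2 ^ n - 2 ^ (n - k)) * D n k) = (\<Sum>k\<le>n. (2 ^ n - 2 ^ (n - k)) * D n k)"
    proof -
      have "(\<Sum>k\<le>n. (2 ^ n - 2 ^ (n - k)) * D n k) = (\<Sum>k = 0..n. (2 ^ n - 2 ^ (n - k)) * D n k)"
        by (simp add: atLeast0AtMost)
      also have "\<dots> = (\<Sum>k = Suc 0..n. (2 ^ n - 2 ^ (n - k)) * D n k)"
        by (subst sum.atLeast_Suc_atMost) simp_all
      finally show ?thesis by simp
    qed
    finally show ?thesis .
  qed
  have "(\<Sum>k\<le>n. (2 ^ n - 2 ^ (n - k)) * D n k) = 2^n * (\<Sum>k\<le>n. D n k) - (\<Sum>k\<le>n. 2^(n-k) * D n k)"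
    unfolding left_diff_distrib sum_subtractf sum_distrib_left ..
  also have "\<dots> = L0 n" using step_b[OF assms] step_c[OF assms] by simp
  finally have R2: "(\<Sum>k\<le>n. (2 ^ n - 2 ^ (n - k)) * D n k) = L0 n" .
  have "(-1) ^ n * L0 n = - L0 n"
    using L0_even[OF assms] by (cases "even n") auto
  then show ?thesis unfolding R R2 L0_def[symmetric] by simp
qed

end
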